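(* Let $c>0$, $\alpha>0$ and $F\in C^2(\mathbb{R}\times[0,\infty))$. Let $w(x,t)$ be the solution of the Cauchy problem for the forced wave equation $$\frac{\partial^2 w}{\partial t^2}= c^2 \frac{\partial^2 w}{\partial x^2}+F(x,t),\qquad w(x,0)=0,\qquad \frac{\partial w}{\partial t}(x,0)=0,$$ i.e. $w(x,t)=\frac{1}{2c}\int_0^t ds\int_{x-c(t-s)}^{x+c(t-s)}F(y,s)\,dy$. Define $$v(x,t)=\frac{2}{B(\alpha,\frac12)}\int_0^1(1-u^2)^{\alpha-1}\,w(x,ut)\,du .$$ Then $v$ solves the non-homogeneous Euler–Poisson–Darboux problem $$\frac{\partial^2 v}{\partial t^2}+\frac{2\alpha}{t}\frac{\partial v}{\partial t}= c^2 \frac{\partial^2 v}{\partial x^2}+\frac{2}{B(\alpha,\frac12)}\int_0^1(1-u^2)^{\alpha-1}F(x,ut)\,du,\quad t>0,$$ with $v(x,0)=0$ and $\frac{\partial v}{\partial t}(x,0)=0$.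
   Context: $B(a,b)=\Gamma(a)\Gamma(b)/\Gamma(a+b)$ denotes the Beta function. *)

theory Defs
  imports "HOL-Analysis.Analysis"
begin

definition C2_halfplane :: "(real \<Rightarrow> real \<Rightarrow> real) \<Rightarrow> bool" where
  "C2_halfplane F \<longleftrightarrow>
    (\<exists>Fx Ft Fxx Fxt Ftx Ftt.
      (\<forall>x. \<forall>t\<ge>0.
         ((\<lambda>y. F y t) has_real_derivative Fx x t) (at x) \<and>
         ((\<lambda>s. F x s) has_real_derivative Ft x t) (at t within {0..}) \<and>
         ((\<lambda>y. Fx y t) has_real_derivative Fxx x t) (at x) \<and>
         ((\<lambda>s. Fx x s) has_real_derivative Fxt x t) (at t within {0..}) \<and>
         ((\<lambda>y. Ft y t) has_real_derivative Ftx x t) (at x) \<and>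
         ((\<lambda>s. Ft x s) has_real_derivative Ftt x t) (at t within {0..})) \<and>
      continuous_on (UNIV \<times> {0..}) (\<lambda>(x, t). F x t) \<and>
      continuous_on (UNIV \<times> {0..}) (\<lambda>(x, t). Fx x t) \<and>
      continuous_on (UNIV \<times> {0..}) (\<lambda>(x, t). Ft x t) \<and>
      continuous_on (UNIV \<times> {0..}) (\<lambda>(x, t). Fxx x t) \<and>
      continuous_on (UNIV \<times> {0..}) (\<lambda>(x, t). Fxt x t) \<and>
      continuous_on (UNIV \<times> {0..}) (\<lambda>(x, t). Ftx x t) \<and>
      continuous_on (UNIV \<times> {0..}) (\<lambda>(x, t). Ftt x t))"

definition wave_sol :: "real \<Rightarrow> (real \<Rightarrow> real \<Rightarrow> real) \<Rightarrow> real \<Rightarrow> real \<Rightarrow> real" where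
  "wave_sol c F x t =
     1 / (2 * c) * integral {0..t} (\<lambda>s. integral {x - c * (t - s) .. x + c * (t - s)} (\<lambda>y. F y s))"

definition EPD_avg :: "real \<Rightarrow> (real \<Rightarrow> real \<Rightarrow> real) \<Rightarrow> real \<Rightarrow> real \<Rightarrow> real" where
  "EPD_avg \<alpha> g x t =
     2 / Beta \<alpha> (1/2) * integral {0..1} (\<lambda>u. (1 - u^2) powr (\<alpha> - 1) * g x (u * t))"

end

theory Submission
  imports Defs
begin


lemma sub01:
  fixes h :: "real \<Rightarrow> real"
  assumes "t \<ge> 0"
  shows "integral {0..t} h = t * integral {0..1} (\<lambda>\<theta>. h (t * \<theta>))"
proof (cases "t = 0")
  case True then show ?thesis by simp
next
  case False
  with assms have t: "t > 0" by simp
  have img: "(\<lambda>x. x / t) ` {0..t} = {0..1}"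
  proof
    show "(\<lambda>x. x / t) ` {0..t} \<subseteq> {0..1}" using t by (auto simp: field_simps)
    show "{0..1} \<subseteq> (\<lambda>x. x / t) ` {0..t}"
    proof
      fix y :: real assume "y \<in> {0..1}"
      then have "t * y \<in> {0..t}" "y = (t*y)/t" using t by (auto simp: mult_le_cancel_left1)
      then show "y \<in> (\<lambda>x. x / t) ` {0..t}" by blast
    qed
  qed
  have "integral ((\<lambda>x. x / t) ` {0..t}) (\<lambda>x. h (t * x)) = (1 / \<bar>t\<bar>) *\<^sub>R integral {0..t} h"
    using t by (intro integral_stretch_real) auto
  then show ?thesis using t by (simp add: img)
qed

lemma CL:
  fixes H :: "real \<Rightarrow> real \<Rightarrow> real" and k :: real
  assumes H: "continuous_on (UNIV \<times> {0..}) (\<lambda>(z,s). H z s)"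
  shows "continuous_on (UNIV \<times> {0..}) (\<lambda>(x,t). integral {0..t} (\<lambda>s. H (x + k*(t-s)) s))"
proof -
  have c1: "continuous_on ((UNIV \<times> {0..}) \<times> cbox 0 1)
     (\<lambda>(p::real\<times>real, \<theta>::real). H (fst p + k*(snd p - snd p * \<theta>)) (snd p * \<theta>))"
  proof -
    have "continuous_on ((UNIV \<times> {0..}) \<times> cbox 0 1)
      ((\<lambda>(z,s). H z s) \<circ> (\<lambda>(p::real\<times>real, \<theta>::real). (fst p + k*(snd p - snd p * \<theta>), snd p * \<theta>)))"
      apply (rule continuous_on_compose)
       apply (auto simp: split_beta intro!: continuous_intros)[1]
      apply (rule continuous_on_subset[OF H])
      by auto
    then show ?thesis by (simp add: o_def split_beta)
  qed
  have "continuous_on (UNIV \<times> {0..}) (\<lambda>p::real\<times>real. integral (cbox 0 1) (\<lambda>\<theta>. H (fst p + k*(snd p - snd p * \<theta>)) (snd p * \<theta>)))"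
    by (rule integral_continuous_on_param) (use c1 in \<open>simp add: split_beta\<close>)
  then have "continuous_on (UNIV \<times> {0..}) (\<lambda>p::real\<times>real. snd p * integral {0..1} (\<lambda>\<theta>. H (fst p + k*(snd p - snd p * \<theta>)) (snd p * \<theta>)))"
    by (auto intro!: continuous_intros)
  then show ?thesis
    apply (rule continuous_on_eq)
    apply (clarsimp simp: split_beta)
    subgoal for x t
      using sub01[of t "\<lambda>s. H (x + k*(t-s)) s"] by (simp add: algebra_simps)
    done
qed


lemma VL:
  fixes \<phi> \<phi>1 :: "real \<Rightarrow> real \<Rightarrow> real"
  assumes d: "\<And>t s. s \<ge> 0 \<Longrightarrow> ((\<lambda>t. \<phi> t s) has_real_derivative \<phi>1 t s) (at t)"
    and c0: "continuous_on (UNIV \<times> {0..}) (\<lambda>(t,s). \<phi> t s)"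
    and c1: "continuous_on (UNIV \<times> {0..}) (\<lambda>(t,s). \<phi>1 t s)"
    and t0: "t0 \<ge> 0"
  shows "((\<lambda>t. integral {0..t} (\<phi> t)) has_real_derivative (\<phi> t0 t0 + integral {0..t0} (\<phi>1 t0))) (at t0 within {0..})"
proof -
  have cs: "continuous_on {0..a} (\<phi> b)" for a b
    by (rule continuous_on_compose2[OF c0, of _ "\<lambda>s. (b,s)", simplified]) (auto intro!: continuous_intros)
  have fx: "((\<lambda>b. integral {0..t0} (\<phi> b)) has_derivative (*) (integral {0..t0} (\<phi>1 t0))) (at t0 within UNIV)"
  proof -
    have "((\<lambda>b. integral (cbox 0 t0) (\<phi> b)) has_real_derivative integral (cbox 0 t0) (\<phi>1 t0)) (at t0 within UNIV)"
      apply (rule leibniz_rule_field_derivative)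
      using d cs c1 by (auto intro!: integrable_continuous_real continuous_on_subset[OF c1])
    then show ?thesis by (simp add: has_field_derivative_def)
  qed
  have fy: "((\<lambda>a. integral {0..a} (\<phi> b)) has_derivative blinfun_apply (blinfun_mult_right (\<phi> b a))) (at a within {0..})"
    if "b \<in> UNIV" "a \<in> {0..}" for a b
  proof -
    have "((\<lambda>a. integral {0..a} (\<phi> b)) has_real_derivative \<phi> b a) (at a within {0..a+1})"
      using that by (intro integral_has_real_derivative cs) auto
    moreover have "at a within {0..a+1} = at a within {0..}"
      by (rule at_within_nhd[of _ "{..<a+1}"]) auto
    ultimately show ?thesis by (simp add: has_field_derivative_def mult.commute)
  qed
  have fyc: "continuous (at (t0, t0) within UNIV \<times> {0..}) (\<lambda>(b, a). blinfun_mult_right (\<phi> b a))"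
  proof -
    have "continuous_on (UNIV \<times> {0..}) (\<lambda>(b, a). blinfun_mult_right (\<phi> b a))"
      using c0 by (auto simp: split_beta intro!: continuous_intros)
    then show ?thesis using t0
      by (simp add: continuous_on_eq_continuous_within)
  qed
  have J: "((\<lambda>(b, a). integral {0..a} (\<phi> b)) has_derivative
      (\<lambda>(tx, ty). integral {0..t0} (\<phi>1 t0) * tx + blinfun_apply (blinfun_mult_right (\<phi> t0 t0)) ty))
      (at (t0, t0) within UNIV \<times> {0..})"
    by (rule has_derivative_partialsI[OF fx fy fyc]) (use t0 in auto)
  have D: "((\<lambda>t. (t,t)) has_derivative (\<lambda>h. (h,h))) (at t0 within {0..})"
    by (auto intro!: derivative_eq_intros)
  have "(((\<lambda>(b, a). integral {0..a} (\<phi> b)) \<circ> (\<lambda>t. (t,t))) has_derivative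
     ((\<lambda>(tx, ty). integral {0..t0} (\<phi>1 t0) * tx + blinfun_apply (blinfun_mult_right (\<phi> t0 t0)) ty) \<circ> (\<lambda>h. (h,h))))
     (at t0 within {0..})"
    apply (rule diff_chain_within[OF D])
    apply (rule has_derivative_subset[OF J]) by auto
  then have "((\<lambda>t. integral {0..t} (\<phi> t)) has_derivative
      (\<lambda>x. x * \<phi> t0 t0 + x * integral {0..t0} (\<phi>1 t0))) (at t0 within {0..})"
    by (simp add: o_def algebra_simps)
  moreover have "(\<lambda>x. x * \<phi> t0 t0 + x * integral {0..t0} (\<phi>1 t0)) = (*) (\<phi> t0 t0 + integral {0..t0} (\<phi>1 t0))"
    by (auto simp: algebra_simps)
  ultimately show ?thesis
    by (simp add: has_field_derivative_def)
qed


lemma KI: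
  fixes K h :: "real \<Rightarrow> real"
  assumes K: "K absolutely_integrable_on {0..1}" and h: "continuous_on {0..1} h"
  shows "(\<lambda>u. K u * h u) absolutely_integrable_on {0..1}"
proof -
  have "(\<lambda>u. h u * K u) absolutely_integrable_on {0..1}"
  proof (rule absolutely_integrable_bounded_measurable_product_real[OF _ _ _ K])
    show "h \<in> borel_measurable (lebesgue_on {0..1})"
      by (rule continuous_imp_measurable_on_sets_lebesgue[OF h]) auto
    show "bounded (h ` {0..1})"
      by (rule compact_imp_bounded[OF compact_continuous_image[OF h]]) auto
  qed auto
  then show ?thesis by (simp add: mult.commute)
qed

lemma KIi:
  fixes K h :: "real \<Rightarrow> real"
  assumes K: "K absolutely_integrable_on {0..1}" and h: "continuous_on {0..1} h"
  shows "(\<lambda>u. K u * h u) integrable_on {0..1}"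
  using KI[OF assms] by (simp add: absolutely_integrable_on_def)

lemma KL:
  fixes K :: "real \<Rightarrow> real" and g g' :: "real \<Rightarrow> real \<Rightarrow> real" and S :: "real set"
  assumes K: "K absolutely_integrable_on {0..1}"
    and S: "convex S" "p0 \<in> S"
    and d: "\<And>p u. p \<in> S \<Longrightarrow> u \<in> {0..1} \<Longrightarrow> ((\<lambda>p. g p u) has_real_derivative g' p u) (at p within S)"
    and c': "continuous_on (S \<times> {0..1}) (\<lambda>(p,u). g' p u)"
    and c: "\<And>p. p \<in> S \<Longrightarrow> continuous_on {0..1} (g p)"
  shows "((\<lambda>p. integral {0..1} (\<lambda>u. K u * g p u)) has_real_derivative
           integral {0..1} (\<lambda>u. K u * g' p0 u)) (at p0 within S)"
proof -
  define I where "I p = integral {0..1} (\<lambda>u. K u * g p u)" for p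
  define D where "D = integral {0..1} (\<lambda>u. K u * g' p0 u)"
  define M where "M = integral {0..1} (\<lambda>u. \<bar>K u\<bar>)"
  have Mi: "(\<lambda>u. \<bar>K u\<bar>) integrable_on {0..1}"
    using K by (simp add: absolutely_integrable_on_def)
  have M0: "M \<ge> 0" unfolding M_def by (rule integral_nonneg[OF Mi]) auto
  have g'c: "continuous_on {0..1} (g' p0)"
    by (rule continuous_on_compose2[OF c', of _ "\<lambda>u. (p0,u)", simplified]) (use S in \<open>auto intro!: continuous_intros\<close>)
  have key: "\<exists>d>0. \<forall>y\<in>S. dist y p0 < d \<longrightarrow> (\<forall>u\<in>{0..1}. \<bar>g y u - g p0 u - (y-p0) * g' p0 u\<bar> \<le> e * \<bar>y - p0\<bar>)"
    if e: "e > 0" for e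
  proof -
    obtain X0 where X0: "p0 \<in> X0" "open X0"
      "\<forall>x\<in>X0 \<inter> S. \<forall>t \<in> {0..1}. dist ((\<lambda>(p,u). g' p u) (x, t)) ((\<lambda>(p,u). g' p u) (p0, t)) \<le> e"
      using continuous_on_prod_compactE[OF c' compact_Icc S(2) e] by blast
    obtain r where r: "r > 0" "ball p0 r \<subseteq> X0" using X0 open_contains_ball by blast
    show ?thesis
    proof (intro exI[of _ r] conjI r ballI impI)
      fix y u :: real assume y: "y \<in> S" "dist y p0 < r" and u: "u \<in> {0..1}"
      let ?S = "S \<inter> ball p0 r"
      have "norm ((\<lambda>q. g q u - q * g' p0 u) y - (\<lambda>q. g q u - q * g' p0 u) p0) \<le> e * norm (y - p0)"
      proof (rule field_differentiable_bound[where f' = "\<lambda>q. g' q u - g' p0 u"])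
        show "convex ?S" using S by (intro convex_Int) auto
        show "((\<lambda>q. g q u - q * g' p0 u) has_field_derivative g' z u - g' p0 u) (at z within ?S)"
          if "z \<in> ?S" for z
          using that u
          by (auto intro!: derivative_eq_intros DERIV_subset[OF d])
        show "norm (g' z u - g' p0 u) \<le> e" if "z \<in> ?S" for z
          using that X0(3) r u by (auto simp: dist_norm dist_commute)
        show "y \<in> ?S" using y by (auto simp: dist_commute)
        show "p0 \<in> ?S" using S r by auto
      qed
      then show "\<bar>g y u - g p0 u - (y-p0) * g' p0 u\<bar> \<le> e * \<bar>y - p0\<bar>"
        by (simp add: algebra_simps)
    qed
  qed
  have est: "\<bar>I y - I p0 - (y - p0) * D\<bar> \<le> M * (e * \<bar>y - p0\<bar>)"
    if y: "y \<in> S" and b: "\<forall>u\<in>{0..1}. \<bar>g y u - g p0 u - (y-p0) * g' p0 u\<bar> \<le> e * \<bar>y - p0\<bar>" for y e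
  proof -
    have hc: "continuous_on {0..1} (\<lambda>u. g y u - g p0 u - (y-p0) * g' p0 u)"
      using c[OF y] c[OF S(2)] g'c by (intro continuous_intros)
    have i1: "(\<lambda>u. K u * g y u) integrable_on {0..1}" by (rule KIi[OF K c[OF y]])
    have i2: "(\<lambda>u. K u * g p0 u) integrable_on {0..1}" by (rule KIi[OF K c[OF S(2)]])
    have i3: "(\<lambda>u. K u * g' p0 u) integrable_on {0..1}" by (rule KIi[OF K g'c])
    have "I y - I p0 - (y - p0) * D = integral {0..1} (\<lambda>u. K u * (g y u - g p0 u - (y-p0) * g' p0 u))"
    proof -
      have "integral {0..1} (\<lambda>u. K u * (g y u - g p0 u - (y-p0) * g' p0 u))
          = integral {0..1} (\<lambda>u. (K u * g y u - K u * g p0 u) - (y-p0) * (K u * g' p0 u))"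
        by (simp add: algebra_simps)
      also have "\<dots> = integral {0..1} (\<lambda>u. K u * g y u - K u * g p0 u) - integral {0..1} (\<lambda>u. (y-p0) * (K u * g' p0 u))"
        by (rule integral_diff) (use i1 i2 i3 in \<open>auto intro!: integrable_diff integrable_on_mult_right\<close>)
      also have "\<dots> = I y - I p0 - (y - p0) * D"
        unfolding I_def D_def by (subst integral_diff[OF i1 i2]) simp
      finally show ?thesis by simp
    qed
    also have "\<bar>\<dots>\<bar> \<le> integral {0..1} (\<lambda>u. \<bar>K u\<bar> * (e * \<bar>y - p0\<bar>))"
    proof -
      have "norm (integral {0..1} (\<lambda>u. K u * (g y u - g p0 u - (y-p0) * g' p0 u))) \<le> integral {0..1} (\<lambda>u. \<bar>K u\<bar> * (e * \<bar>y - p0\<bar>))"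
      proof (rule integral_norm_bound_integral)
        show "(\<lambda>u. K u * (g y u - g p0 u - (y-p0) * g' p0 u)) integrable_on {0..1}" by (rule KIi[OF K hc])
        show "(\<lambda>u. \<bar>K u\<bar> * (e * \<bar>y - p0\<bar>)) integrable_on {0..1}" using Mi by (rule integrable_on_mult_left)
        show "norm (K u * (g y u - g p0 u - (y-p0) * g' p0 u)) \<le> \<bar>K u\<bar> * (e * \<bar>y - p0\<bar>)"
          if "u \<in> {0..1}" for u
          using b that by (auto simp: abs_mult intro: mult_left_mono)
      qed
      then show ?thesis by simp
    qed
    also have "\<dots> = M * (e * \<bar>y - p0\<bar>)" unfolding M_def by (simp add: integral_mult_left)
    finally show ?thesis .
  qed
  have "((\<lambda>y. (I y - I p0) / (y - p0)) \<longlongrightarrow> D) (at p0 within S)"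
  proof (rule tendstoI)
    fix e :: real assume e: "e > 0"
    define e1 where "e1 = e / (2 * (M + 1))"
    have e1: "e1 > 0" using e M0 by (simp add: e1_def)
    obtain r where r: "r > 0" "\<forall>y\<in>S. dist y p0 < r \<longrightarrow> (\<forall>u\<in>{0..1}. \<bar>g y u - g p0 u - (y-p0) * g' p0 u\<bar> \<le> e1 * \<bar>y - p0\<bar>)"
      using key[OF e1] by blast
    show "\<forall>\<^sub>F y in at p0 within S. dist ((I y - I p0) / (y - p0)) D < e"
      unfolding eventually_at
    proof (intro exI[of _ r] conjI r ballI impI)
      fix y assume y: "y \<in> S" "y \<noteq> p0 \<and> dist y p0 < r"
      have yp: "\<bar>y - p0\<bar> > 0" using y by simp
      have E: "\<bar>I y - I p0 - (y - p0) * D\<bar> \<le> M * (e1 * \<bar>y - p0\<bar>)"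
        using est[OF y(1)] r y by auto
      have "(I y - I p0) / (y - p0) - D = (I y - I p0 - (y - p0) * D) / (y - p0)"
        using y by (simp add: field_simps)
      then have "dist ((I y - I p0) / (y - p0)) D = \<bar>I y - I p0 - (y - p0) * D\<bar> / \<bar>y - p0\<bar>"
        by (simp add: dist_real_def abs_divide)
      also have "\<dots> \<le> M * e1"
        using E yp by (simp add: divide_le_eq mult.assoc)
      also have "\<dots> < e"
        using M0 e by (simp add: e1_def field_simps) (smt (verit) mult_nonneg_nonneg)
      finally show "dist ((I y - I p0) / (y - p0)) D < e" .
    qed
  qed
  then show ?thesis unfolding has_field_derivative_iff I_def D_def .
qed


lemma CLg:
  fixes G :: "real \<Rightarrow> real \<Rightarrow> real \<Rightarrow> real"
  assumes G: "continuous_on (UNIV \<times> UNIV \<times> {0..}) (\<lambda>(x,t,s). G x t s)"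
  shows "continuous_on (UNIV \<times> {0..}) (\<lambda>(x,t). integral {0..t} (G x t))"
proof -
  have c1: "continuous_on ((UNIV \<times> {0..}) \<times> cbox 0 1)
     (\<lambda>(p::real\<times>real, \<theta>::real). G (fst p) (snd p) (snd p * \<theta>))"
  proof -
    have "continuous_on ((UNIV \<times> {0..}) \<times> cbox 0 1)
      ((\<lambda>(x,t,s). G x t s) \<circ> (\<lambda>(p::real\<times>real, \<theta>::real). (fst p, snd p, snd p * \<theta>)))"
      apply (rule continuous_on_compose)
       apply (auto simp: split_beta intro!: continuous_intros)[1]
      apply (rule continuous_on_subset[OF G])
      by auto
    then show ?thesis by (simp add: o_def split_beta)
  qed
  have "continuous_on (UNIV \<times> {0..}) (\<lambda>p::real\<times>real. integral (cbox 0 1) (\<lambda>\<theta>. G (fst p) (snd p) (snd p * \<theta>)))"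
    by (rule integral_continuous_on_param) (use c1 in \<open>simp add: split_beta\<close>)
  then have "continuous_on (UNIV \<times> {0..}) (\<lambda>p::real\<times>real. snd p * integral {0..1} (\<lambda>\<theta>. G (fst p) (snd p) (snd p * \<theta>)))"
    by (auto intro!: continuous_intros)
  then show ?thesis
    apply (rule continuous_on_eq)
    apply (clarsimp simp: split_beta)
    subgoal for x t
      using sub01[of t "G x t"] by (simp add: algebra_simps)
    done
qed

lemma comp_cont:
  fixes H :: "real \<Rightarrow> real \<Rightarrow> real" and a b :: "'a::topological_space \<Rightarrow> real"
  assumes H: "continuous_on (UNIV \<times> {0..}) (\<lambda>(z,s). H z s)"
    and a: "continuous_on A a" and b: "continuous_on A b" and bp: "\<And>p. p \<in> A \<Longrightarrow> b p \<ge> 0"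
  shows "continuous_on A (\<lambda>p. H (a p) (b p))"
proof -
  have "continuous_on A ((\<lambda>(z,s). H z s) \<circ> (\<lambda>p. (a p, b p)))"
    apply (rule continuous_on_compose)
     apply (auto intro!: continuous_intros a b)[1]
    apply (rule continuous_on_subset[OF H])
    using bp by auto
  then show ?thesis by (simp add: o_def)
qed

lemma K0_int:
  fixes \<alpha> :: real
  assumes "\<alpha> > 0"
  shows "(\<lambda>u. (1 - u) powr (\<alpha> - 1)) absolutely_integrable_on {0..1}"
proof -
  have B: "(\<lambda>t. t powr (1 - 1) * (1 - t) powr (\<alpha> - 1)) integrable_on {0..1}"
    using has_integral_Beta_real[of 1 \<alpha>] assms unfolding integrable_on_def by force
  have "(\<lambda>u. (1 - u) powr (\<alpha> - 1)) integrable_on {0..1}"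
    apply (rule integrable_spike_finite[of "{0}" _ _ "\<lambda>t. t powr (1 - 1) * (1 - t) powr (\<alpha> - 1)"])
      apply simp
     apply simp
    by (rule B)
  then show ?thesis by (rule nonnegative_absolutely_integrable_1) auto
qed

locale WF =
  fixes F Fx Fxx :: "real \<Rightarrow> real \<Rightarrow> real" and c :: real
  assumes c: "c > 0"
    and dF: "\<And>z s. s \<ge> 0 \<Longrightarrow> ((\<lambda>y. F y s) has_real_derivative Fx z s) (at z)"
    and dFx: "\<And>z s. s \<ge> 0 \<Longrightarrow> ((\<lambda>y. Fx y s) has_real_derivative Fxx z s) (at z)"
    and cF: "continuous_on (UNIV \<times> {0..}) (\<lambda>(x,t). F x t)"
    and cFx: "continuous_on (UNIV \<times> {0..}) (\<lambda>(x,t). Fx x t)"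
    and cFxx: "continuous_on (UNIV \<times> {0..}) (\<lambda>(x,t). Fxx x t)"
begin

lemma F_chain:
  assumes "s \<ge> 0" "(g has_real_derivative g') (at t within T)"
  shows "((\<lambda>t. F (g t) s) has_real_derivative Fx (g t) s * g') (at t within T)"
  using DERIV_chain[OF dF[OF assms(1)] assms(2)] by (simp add: o_def)

lemma Fx_chain:
  assumes "s \<ge> 0" "(g has_real_derivative g') (at t within T)"
  shows "((\<lambda>t. Fx (g t) s) has_real_derivative Fxx (g t) s * g') (at t within T)"
  using DERIV_chain[OF dFx[OF assms(1)] assms(2)] by (simp add: o_def)

definition Pp :: "real \<Rightarrow> real \<Rightarrow> real" where
  "Pp z s = z * integral {0..1} (\<lambda>\<theta>. F (z*\<theta>) s)"

lemma Pp_cont: "continuous_on (UNIV \<times> {0..}) (\<lambda>(z,s). Pp z s)"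
proof -
  have c1: "continuous_on ((UNIV \<times> {0..}) \<times> cbox 0 1) (\<lambda>(p::real\<times>real, \<theta>::real). F (fst p * \<theta>) (snd p))"
  proof -
    have "continuous_on ((UNIV \<times> {0..}) \<times> cbox 0 1) (\<lambda>q::(real\<times>real)\<times>real. F (fst (fst q) * snd q) (snd (fst q)))"
      by (rule comp_cont[OF cF]) (auto intro!: continuous_intros)
    then show ?thesis by (simp add: split_beta)
  qed
  have "continuous_on (UNIV \<times> {0..}) (\<lambda>p::real\<times>real. integral (cbox 0 1) (\<lambda>\<theta>. F (fst p * \<theta>) (snd p)))"
    by (rule integral_continuous_on_param) (use c1 in \<open>simp add: split_beta\<close>)
  then have "continuous_on (UNIV \<times> {0..}) (\<lambda>p::real\<times>real. fst p * integral {0..1} (\<lambda>\<theta>. F (fst p * \<theta>) (snd p)))"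
    by (auto intro!: continuous_intros)
  then show ?thesis by (simp add: Pp_def split_beta)
qed

lemma Pp_deriv:
  assumes s: "s \<ge> 0"
  shows "((\<lambda>z. Pp z s) has_real_derivative F z s) (at z)"
proof -
  have cF1: "continuous_on A (\<lambda>\<theta>. F (a * \<theta>) s)" for a A
    by (rule comp_cont[OF cF]) (auto intro!: continuous_intros s)
  have cFx1: "continuous_on A (\<lambda>\<theta>. Fx (a * \<theta>) s)" for a A
    by (rule comp_cont[OF cFx]) (auto intro!: continuous_intros s)
  have L: "((\<lambda>z. integral (cbox 0 1) (\<lambda>\<theta>. F (z*\<theta>) s)) has_real_derivative
             integral (cbox 0 1) (\<lambda>\<theta>. Fx (z*\<theta>) s * \<theta>)) (at z within UNIV)"
  proof (rule leibniz_rule_field_derivative)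
    show "((\<lambda>z. F (z * \<theta>) s) has_real_derivative Fx (x * \<theta>) s * \<theta>) (at x within UNIV)" for x \<theta>
      by (rule F_chain[OF s]) (auto intro!: derivative_eq_intros)
    show "(\<lambda>\<theta>. F (x * \<theta>) s) integrable_on cbox 0 1" for x
      by (auto intro!: integrable_continuous_real cF1)
    show "continuous_on (UNIV \<times> cbox 0 1) (\<lambda>(x, \<theta>). Fx (x * \<theta>) s * \<theta>)"
      by (auto simp: split_beta intro!: continuous_intros comp_cont[OF cFx] s)
  qed auto
  have P: "((\<lambda>z. Pp z s) has_real_derivative
      1 * integral {0..1} (\<lambda>\<theta>. F (z*\<theta>) s) + z * integral {0..1} (\<lambda>\<theta>. Fx (z*\<theta>) s * \<theta>)) (at z)"
    unfolding Pp_def using L by (auto intro!: derivative_eq_intros)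
  have ftc: "((\<lambda>\<theta>. F (z*\<theta>) s + \<theta> * (Fx (z*\<theta>) s * z)) has_integral (1 * F (z*1) s - 0 * F (z*0) s)) {0..1}"
  proof (rule fundamental_theorem_of_calculus)
    show "((\<lambda>\<theta>. \<theta> * F (z*\<theta>) s) has_vector_derivative F (z*x) s + x * (Fx (z*x) s * z)) (at x within {0..1})" for x
      unfolding has_real_derivative_iff_has_vector_derivative[symmetric]
      by (auto intro!: derivative_eq_intros F_chain[OF s])
  qed auto
  have i1: "(\<lambda>\<theta>. F (z*\<theta>) s) integrable_on {0..1}" by (auto intro!: integrable_continuous_real cF1)
  have i2: "(\<lambda>\<theta>. \<theta> * (Fx (z*\<theta>) s * z)) integrable_on {0..1}"
    by (auto intro!: integrable_continuous_real continuous_intros cFx1)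
  have "integral {0..1} (\<lambda>\<theta>. F (z*\<theta>) s + \<theta> * (Fx (z*\<theta>) s * z)) = F z s"
    using ftc by (simp add: has_integral_iff)
  then have "integral {0..1} (\<lambda>\<theta>. F (z*\<theta>) s) + integral {0..1} (\<lambda>\<theta>. \<theta> * (Fx (z*\<theta>) s * z)) = F z s"
    using integral_add[OF i1 i2] by simp
  moreover have "integral {0..1} (\<lambda>\<theta>. \<theta> * (Fx (z*\<theta>) s * z)) = z * integral {0..1} (\<lambda>\<theta>. Fx (z*\<theta>) s * \<theta>)"
    by (simp add: integral_mult_right[symmetric] algebra_simps)
  ultimately show ?thesis using P by simp
qed

lemma Pp_chain:
  assumes "s \<ge> 0" "(g has_real_derivative g') (at t within T)"
  shows "((\<lambda>t. Pp (g t) s) has_real_derivative F (g t) s * g') (at t within T)"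
  using DERIV_chain[OF Pp_deriv[OF assms(1)] assms(2)] by (simp add: o_def)

lemma Pp_int:
  assumes "s \<ge> 0" "a \<le> b"
  shows "integral {a..b} (\<lambda>y. F y s) = Pp b s - Pp a s"
proof -
  have "((\<lambda>y. F y s) has_integral (Pp b s - Pp a s)) {a..b}"
    apply (rule fundamental_theorem_of_calculus[OF assms(2)])
    unfolding has_real_derivative_iff_has_vector_derivative[symmetric]
    by (rule has_field_derivative_at_within[OF Pp_deriv[OF assms(1)]])
  then show ?thesis by (simp add: has_integral_iff)
qed

end


context WF begin

definition "Gt x t s = Pp (x + c*(t-s)) s - Pp (x - c*(t-s)) s"
definition "Wt x t = 1/2 * integral {0..t} (\<lambda>s. F (x + c*(t-s)) s + F (x - c*(t-s)) s)"
definition "Wtt x t = F x t + c/2 * integral {0..t} (\<lambda>s. Fx (x + c*(t-s)) s - Fx (x - c*(t-s)) s)"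
definition "Wx x t = 1/(2*c) * integral {0..t} (\<lambda>s. F (x + c*(t-s)) s - F (x - c*(t-s)) s)"
definition "Wxx x t = 1/(2*c) * integral {0..t} (\<lambda>s. Fx (x + c*(t-s)) s - Fx (x - c*(t-s)) s)"

lemma w_eq:
  assumes t: "t \<ge> 0"
  shows "wave_sol c F x t = 1/(2*c) * integral {0..t} (Gt x t)"
proof -
  have "integral {0..t} (\<lambda>s. integral {x - c * (t - s) .. x + c * (t - s)} (\<lambda>y. F y s)) = integral {0..t} (Gt x t)"
  proof (rule integral_cong)
    fix s assume s: "s \<in> {0..t}"
    then have "c * (t - s) \<ge> 0" using c by auto
    then show "integral {x - c * (t - s) .. x + c * (t - s)} (\<lambda>y. F y s) = Gt x t s"
      unfolding Gt_def using s by (subst Pp_int) auto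
  qed
  then show ?thesis unfolding wave_sol_def by simp
qed

lemma w0: "wave_sol c F x 0 = 0"
  unfolding wave_sol_def by simp

lemma Wt0: "Wt x 0 = 0"
  unfolding Wt_def by simp

lemma cGt: "continuous_on (UNIV \<times> {0..}) (\<lambda>(t,s). Gt x t s)"
  unfolding Gt_def
  by (auto simp: split_beta intro!: continuous_intros comp_cont[OF Pp_cont])

lemma w_dt:
  assumes t0: "t0 \<ge> 0"
  shows "((\<lambda>t. wave_sol c F x t) has_real_derivative Wt x t0) (at t0 within {0..})"
proof -
  have V: "((\<lambda>t. integral {0..t} (Gt x t)) has_real_derivative
      (Gt x t0 t0 + integral {0..t0} (\<lambda>s. c * (F (x + c*(t0-s)) s + F (x - c*(t0-s)) s)))) (at t0 within {0..})"
  proof (rule VL[OF _ cGt _ t0])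
    fix t s :: real assume s: "s \<ge> 0"
    have e1: "((\<lambda>t. x + c*(t-s)) has_real_derivative c) (at t)" by (auto intro!: derivative_eq_intros)
    have e2: "((\<lambda>t. x - c*(t-s)) has_real_derivative -c) (at t)" by (auto intro!: derivative_eq_intros)
    from DERIV_diff[OF Pp_chain[OF s e1] Pp_chain[OF s e2]]
    show "((\<lambda>t. Gt x t s) has_real_derivative c * (F (x + c*(t-s)) s + F (x - c*(t-s)) s)) (at t)"
      unfolding Gt_def by (simp add: algebra_simps)
  next
    show "continuous_on (UNIV \<times> {0..}) (\<lambda>(t,s). c * (F (x + c*(t-s)) s + F (x - c*(t-s)) s))"
      by (auto simp: split_beta intro!: continuous_intros comp_cont[OF cF])
  qed
  have V2: "((\<lambda>t. 1/(2*c) * integral {0..t} (Gt x t)) has_real_derivative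
      1/(2*c) * (Gt x t0 t0 + integral {0..t0} (\<lambda>s. c * (F (x + c*(t0-s)) s + F (x - c*(t0-s)) s)))) (at t0 within {0..})"
    by (rule DERIV_cmult[OF V])
  have eq: "1/(2*c) * (Gt x t0 t0 + integral {0..t0} (\<lambda>s. c * (F (x + c*(t0-s)) s + F (x - c*(t0-s)) s))) = Wt x t0"
    using c unfolding Wt_def Gt_def by (simp add: integral_mult_right)
  show ?thesis
    apply (rule has_field_derivative_transform_within[where d=1])
    using V2 eq t0 w_eq by auto
qed

lemma Wt_dt:
  assumes t0: "t0 \<ge> 0"
  shows "((\<lambda>t. Wt x t) has_real_derivative Wtt x t0) (at t0 within {0..})"
proof -
  have V: "((\<lambda>t. integral {0..t} (\<lambda>s. F (x + c*(t-s)) s + F (x - c*(t-s)) s)) has_real_derivative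
      ((F (x + c*(t0-t0)) t0 + F (x - c*(t0-t0)) t0) + integral {0..t0} (\<lambda>s. c * (Fx (x + c*(t0-s)) s - Fx (x - c*(t0-s)) s)))) (at t0 within {0..})"
  proof (rule VL[OF _ _ _ t0])
    fix t s :: real assume s: "s \<ge> 0"
    have e1: "((\<lambda>t. x + c*(t-s)) has_real_derivative c) (at t)" by (auto intro!: derivative_eq_intros)
    have e2: "((\<lambda>t. x - c*(t-s)) has_real_derivative -c) (at t)" by (auto intro!: derivative_eq_intros)
    from DERIV_add[OF F_chain[OF s e1] F_chain[OF s e2]]
    show "((\<lambda>t. F (x + c*(t-s)) s + F (x - c*(t-s)) s) has_real_derivative c * (Fx (x + c*(t-s)) s - Fx (x - c*(t-s)) s)) (at t)"
      by (simp add: algebra_simps)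
  next
    show "continuous_on (UNIV \<times> {0..}) (\<lambda>(t,s). F (x + c*(t-s)) s + F (x - c*(t-s)) s)"
      by (auto simp: split_beta intro!: continuous_intros comp_cont[OF cF])
    show "continuous_on (UNIV \<times> {0..}) (\<lambda>(t,s). c * (Fx (x + c*(t-s)) s - Fx (x - c*(t-s)) s))"
      by (auto simp: split_beta intro!: continuous_intros comp_cont[OF cFx])
  qed
  have eq: "1/2 * ((F (x + c*(t0-t0)) t0 + F (x - c*(t0-t0)) t0) + integral {0..t0} (\<lambda>s. c * (Fx (x + c*(t0-s)) s - Fx (x - c*(t0-s)) s))) = Wtt x t0"
    unfolding Wtt_def by (simp add: integral_mult_right)
  show ?thesis
    using DERIV_cmult[OF V, of "1/2"] eq unfolding Wt_def by simp
qed

end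


context WF begin

lemma w_dx:
  assumes t: "t \<ge> 0"
  shows "((\<lambda>x. wave_sol c F x t) has_real_derivative Wx x0 t) (at x0)"
proof -
  have L: "((\<lambda>x. integral (cbox 0 t) (\<lambda>s. Gt x t s)) has_real_derivative
     integral (cbox 0 t) (\<lambda>s. F (x0 + c*(t-s)) s - F (x0 - c*(t-s)) s)) (at x0 within UNIV)"
  proof (rule leibniz_rule_field_derivative)
    fix x s assume s: "s \<in> cbox 0 t"
    have s0: "s \<ge> 0" using s by simp
    have e1: "((\<lambda>x. x + c*(t-s)) has_real_derivative 1) (at x within UNIV)" by (auto intro!: derivative_eq_intros)
    have e2: "((\<lambda>x. x - c*(t-s)) has_real_derivative 1) (at x within UNIV)" by (auto intro!: derivative_eq_intros)
    from DERIV_diff[OF Pp_chain[OF s0 e1] Pp_chain[OF s0 e2]]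
    show "((\<lambda>x. Gt x t s) has_real_derivative F (x + c*(t-s)) s - F (x - c*(t-s)) s) (at x within UNIV)"
      unfolding Gt_def by simp
  next
    fix x show "(\<lambda>s. Gt x t s) integrable_on cbox 0 t"
      unfolding Gt_def
      by (rule integrable_continuous) (auto intro!: continuous_intros comp_cont[OF Pp_cont])
  next
    show "continuous_on (UNIV \<times> cbox 0 t) (\<lambda>(x, s). F (x + c*(t-s)) s - F (x - c*(t-s)) s)"
      by (auto simp: split_beta intro!: continuous_intros comp_cont[OF cF])
  qed auto
  have "(\<lambda>x. wave_sol c F x t) = (\<lambda>x. 1/(2*c) * integral {0..t} (\<lambda>s. Gt x t s))"
    using w_eq[OF t] by auto
  then show ?thesis
    using DERIV_cmult[OF L, of "1/(2*c)"] unfolding Wx_def by simp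
qed

lemma Wx_dx:
  assumes t: "t \<ge> 0"
  shows "((\<lambda>x. Wx x t) has_real_derivative Wxx x0 t) (at x0)"
proof -
  have L: "((\<lambda>x. integral (cbox 0 t) (\<lambda>s. F (x + c*(t-s)) s - F (x - c*(t-s)) s)) has_real_derivative
     integral (cbox 0 t) (\<lambda>s. Fx (x0 + c*(t-s)) s - Fx (x0 - c*(t-s)) s)) (at x0 within UNIV)"
  proof (rule leibniz_rule_field_derivative)
    fix x s assume s: "s \<in> cbox 0 t"
    have s0: "s \<ge> 0" using s by simp
    have e1: "((\<lambda>x. x + c*(t-s)) has_real_derivative 1) (at x within UNIV)" by (auto intro!: derivative_eq_intros)
    have e2: "((\<lambda>x. x - c*(t-s)) has_real_derivative 1) (at x within UNIV)" by (auto intro!: derivative_eq_intros)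
    from DERIV_diff[OF F_chain[OF s0 e1] F_chain[OF s0 e2]]
    show "((\<lambda>x. F (x + c*(t-s)) s - F (x - c*(t-s)) s) has_real_derivative Fx (x + c*(t-s)) s - Fx (x - c*(t-s)) s) (at x within UNIV)"
      by simp
  next
    fix x show "(\<lambda>s. F (x + c*(t-s)) s - F (x - c*(t-s)) s) integrable_on cbox 0 t"
      by (rule integrable_continuous) (auto intro!: continuous_intros comp_cont[OF cF])
  next
    show "continuous_on (UNIV \<times> cbox 0 t) (\<lambda>(x, s). Fx (x + c*(t-s)) s - Fx (x - c*(t-s)) s)"
      by (auto simp: split_beta intro!: continuous_intros comp_cont[OF cFx])
  qed auto
  show ?thesis
    using DERIV_cmult[OF L, of "1/(2*c)"] unfolding Wx_def Wxx_def by simp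
qed

lemma cWt: "continuous_on (UNIV \<times> {0..}) (\<lambda>(x,t). Wt x t)"
proof -
  have "continuous_on (UNIV \<times> {0..}) (\<lambda>(x,t). integral {0..t} (\<lambda>s. F (x + c*(t-s)) s + F (x - c*(t-s)) s))"
    by (rule CLg) (auto simp: split_beta intro!: continuous_intros comp_cont[OF cF])
  then have "continuous_on (UNIV \<times> {0..}) (\<lambda>p. 1/2 * (\<lambda>(x,t). integral {0..t} (\<lambda>s. F (x + c*(t-s)) s + F (x - c*(t-s)) s)) p)"
    by (intro continuous_intros)
  then show ?thesis by (simp add: Wt_def split_beta)
qed

lemma cWx: "continuous_on (UNIV \<times> {0..}) (\<lambda>(x,t). Wx x t)"
proof -
  have "continuous_on (UNIV \<times> {0..}) (\<lambda>(x,t). integral {0..t} (\<lambda>s. F (x + c*(t-s)) s - F (x - c*(t-s)) s))"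
    by (rule CLg) (auto simp: split_beta intro!: continuous_intros comp_cont[OF cF])
  then have "continuous_on (UNIV \<times> {0..}) (\<lambda>p. 1/(2*c) * (\<lambda>(x,t). integral {0..t} (\<lambda>s. F (x + c*(t-s)) s - F (x - c*(t-s)) s)) p)"
    by (intro continuous_intros)
  then show ?thesis by (simp add: Wx_def split_beta)
qed

lemma cWxx: "continuous_on (UNIV \<times> {0..}) (\<lambda>(x,t). Wxx x t)"
proof -
  have "continuous_on (UNIV \<times> {0..}) (\<lambda>(x,t). integral {0..t} (\<lambda>s. Fx (x + c*(t-s)) s - Fx (x - c*(t-s)) s))"
    by (rule CLg) (auto simp: split_beta intro!: continuous_intros comp_cont[OF cFx])
  then have "continuous_on (UNIV \<times> {0..}) (\<lambda>p. 1/(2*c) * (\<lambda>(x,t). integral {0..t} (\<lambda>s. Fx (x + c*(t-s)) s - Fx (x - c*(t-s)) s)) p)"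
    by (intro continuous_intros)
  then show ?thesis by (simp add: Wxx_def split_beta)
qed

lemma wave: "Wtt x t = F x t + c^2 * Wxx x t"
  unfolding Wtt_def Wxx_def using c by (simp add: power2_eq_square field_simps)

lemma cWtt: "continuous_on (UNIV \<times> {0..}) (\<lambda>(x,t). Wtt x t)"
proof -
  have "continuous_on (UNIV \<times> {0..}) (\<lambda>p. (\<lambda>(x,t). F x t) p + c^2 * (\<lambda>(x,t). Wxx x t) p)"
    using cF cWxx by (intro continuous_intros)
  then show ?thesis by (simp add: wave split_beta)
qed

end


lemma chainT:
  fixes f f' :: "real \<Rightarrow> real"
  assumes d: "\<And>r. r \<ge> 0 \<Longrightarrow> (f has_real_derivative f' r) (at r within {0..})"
    and u: "u \<ge> 0" and p: "p \<ge> 0"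
  shows "((\<lambda>p. f (u*p)) has_real_derivative f' (u*p) * u) (at p within {0..})"
proof -
  have "(f has_real_derivative f' (u*p)) (at (u*p) within ((\<lambda>p. u*p) ` {0..}))"
    by (rule DERIV_subset[OF d]) (use u p in auto)
  moreover have "((\<lambda>p. u*p) has_real_derivative u) (at p within {0..})"
    by (auto intro!: derivative_eq_intros)
  ultimately show ?thesis using DERIV_image_chain by (fastforce simp: o_def)
qed

lemma at_of_within:
  assumes "(f has_real_derivative D) (at t within {0..})" "t > 0"
  shows "(f has_real_derivative D) (at t)"
proof -
  have "t \<in> interior {0..}" using assms(2) by simp
  then show ?thesis using assms(1) at_within_interior by metis
qed

lemma cont0:
  fixes f :: "real \<Rightarrow> real"
  assumes "\<And>r. r \<ge> 0 \<Longrightarrow> (f has_real_derivative f' r) (at r within {0..})"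
  shows "continuous_on {0..} f"
  using assms by (meson DERIV_continuous atLeast_iff continuous_on_eq_continuous_within)

lemma comp0:
  fixes f :: "real \<Rightarrow> real" and b :: "real \<Rightarrow> real"
  assumes "continuous_on {0..} f" "continuous_on A b" "\<And>q. q \<in> A \<Longrightarrow> b q \<ge> 0"
  shows "continuous_on A (\<lambda>q. f (b q))"
  using continuous_on_compose2[OF assms(1) assms(2)] assms(3) by auto



theorem theorem2p1:
  fixes c \<alpha> :: real and F :: "real \<Rightarrow> real \<Rightarrow> real"
  assumes "c > 0" and "\<alpha> > 0" and "C2_halfplane F"
  defines "w \<equiv> wave_sol c F"
  defines "v \<equiv> EPD_avg \<alpha> w"
  shows "\<exists>vt vtt vx vxx.
           (\<forall>x. \<forall>t>0.
              ((\<lambda>s. v x s) has_real_derivative vt x t) (at t) \<and>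
              ((\<lambda>s. vt x s) has_real_derivative vtt x t) (at t) \<and>
              ((\<lambda>y. v y t) has_real_derivative vx x t) (at x) \<and>
              ((\<lambda>y. vx y t) has_real_derivative vxx x t) (at x) \<and>
              vtt x t + 2 * \<alpha> / t * vt x t = c^2 * vxx x t + EPD_avg \<alpha> F x t) \<and>
           (\<forall>x. v x 0 = 0 \<and> ((\<lambda>s. v x s) has_real_derivative 0) (at 0 within {0..}))"
proof -
  from assms(3) obtain Fx Fxx where
    dF: "\<And>z s. s \<ge> 0 \<Longrightarrow> ((\<lambda>y. F y s) has_real_derivative Fx z s) (at z)"
    and dFx: "\<And>z s. s \<ge> 0 \<Longrightarrow> ((\<lambda>y. Fx y s) has_real_derivative Fxx z s) (at z)"
    and cF: "continuous_on (UNIV \<times> {0..}) (\<lambda>(x,t). F x t)"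
    and cFx: "continuous_on (UNIV \<times> {0..}) (\<lambda>(x,t). Fx x t)"
    and cFxx: "continuous_on (UNIV \<times> {0..}) (\<lambda>(x,t). Fxx x t)"
    unfolding C2_halfplane_def by blast
  interpret WF F Fx Fxx c
    by unfold_locales (use assms(1) dF dFx cF cFx cFxx in auto)
  define K0 where "K0 u = (1 - u) powr (\<alpha> - 1)" for u :: real
  define E where "E u = (1 + u) powr (\<alpha> - 1)" for u :: real
  define C where "C = 2 / Beta \<alpha> (1/2)"
  define I where "I h = integral {0..1} (\<lambda>u. K0 u * h u)" for h
  have K0i: "K0 absolutely_integrable_on {0..1}"
    unfolding K0_def[abs_def] by (rule K0_int[OF assms(2)])
  have kern: "(1 - u^2) powr (\<alpha> - 1) = K0 u * E u" if "u \<in> {0..1}" for u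
  proof (cases "u = 1")
    case True then show ?thesis by (simp add: K0_def)
  next
    case False
    with that have "1 - u > 0" "1 + u > 0" by auto
    then have "(1 - u^2) powr (\<alpha> - 1) = ((1 - u) * (1 + u)) powr (\<alpha> - 1)"
      by (simp add: power2_eq_square algebra_simps)
    also have "\<dots> = K0 u * E u" unfolding K0_def E_def
      using \<open>1 - u > 0\<close> \<open>1 + u > 0\<close> by (simp add: powr_mult)
    finally show ?thesis .
  qed
  have avg: "EPD_avg \<alpha> g x t = C * I (\<lambda>u. E u * g x (u*t))" for g x t
  proof -
    have "integral {0..1} (\<lambda>u. (1 - u^2) powr (\<alpha> - 1) * g x (u * t)) = I (\<lambda>u. E u * g x (u*t))"
      unfolding I_def
    proof (rule integral_cong)
      fix u :: real assume u: "u \<in> {0..1}"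
      show "(1 - u^2) powr (\<alpha> - 1) * g x (u * t) = K0 u * (E u * g x (u*t))"
        using kern[OF u] by (simp only: mult.assoc mult.commute[of t u])
    qed
    then show ?thesis unfolding EPD_avg_def C_def by simp
  qed
  have Iadd: "I (\<lambda>u. h1 u + h2 u) = I h1 + I h2" if "continuous_on {0..1} h1" "continuous_on {0..1} h2" for h1 h2
    unfolding I_def using integral_add[OF KIi[OF K0i that(1)] KIi[OF K0i that(2)]]
    by (simp add: distrib_left)
  have Idiff: "I (\<lambda>u. h1 u - h2 u) = I h1 - I h2" if "continuous_on {0..1} h1" "continuous_on {0..1} h2" for h1 h2
    unfolding I_def using integral_diff[OF KIi[OF K0i that(1)] KIi[OF K0i that(2)]]
    by (simp add: right_diff_distrib)
  have Imult: "I (\<lambda>u. a * h u) = a * I h" for a h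
  proof -
    have "(\<lambda>u. K0 u * (a * h u)) = (\<lambda>u. a * (K0 u * h u))" by (simp add: algebra_simps)
    then show ?thesis unfolding I_def by simp
  qed
  have Icong: "I h1 = I h2" if "\<And>u. u \<in> {0..1} \<Longrightarrow> h1 u = h2 u" for h1 h2
    unfolding I_def by (rule integral_cong) (simp add: that)
  have cE: "continuous_on A (\<lambda>q. E (b q))" if "continuous_on A b" "\<And>q. q \<in> A \<Longrightarrow> b q \<in> {0..1}" for A and b :: "'z::topological_space \<Rightarrow> real"
  proof -
    have pos: "\<forall>q\<in>A. 1 + b q \<ge> 0 \<and> (1 + b q = 0 \<longrightarrow> \<alpha> - 1 > 0)"
      using that(2) by force
    show ?thesis unfolding E_def
      by (rule continuous_on_powr'[OF _ _ pos]) (use that in \<open>auto intro!: continuous_intros\<close>)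
  qed
  have cw: "continuous_on {0..} (w x)" for x
    unfolding w_def by (rule cont0[OF w_dt])
  have cWt1: "continuous_on {0..} (Wt x)" for x
    by (rule cont0[OF Wt_dt])
  define V where "V x t = C * I (\<lambda>u. E u * w x (u*t))" for x t
  have vV: "v = V" by (auto simp: v_def V_def avg fun_eq_iff)
  define vt where "vt x t = C * I (\<lambda>u. E u * u * Wt x (u*t))" for x t
  define vtt where "vtt x t = C * I (\<lambda>u. E u * u * (u * Wtt x (u*t)))" for x t
  define vx where "vx x t = C * I (\<lambda>u. E u * Wx x (u*t))" for x t
  define vxx where "vxx x t = C * I (\<lambda>u. E u * Wxx x (u*t))" for x t
  have Dt: "((\<lambda>s. V x s) has_real_derivative vt x t) (at t within {0..})" if t: "t \<ge> 0" for x t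
  proof -
    have "((\<lambda>p. integral {0..1} (\<lambda>u. K0 u * (E u * w x (u*p)))) has_real_derivative
        integral {0..1} (\<lambda>u. K0 u * (E u * u * Wt x (u*t)))) (at t within {0..})"
    proof (rule KL[OF K0i])
      show "convex {0::real..}" by (simp add: convex_real_interval)
      show "t \<in> {0..}" using t by simp
      fix p u :: real assume p: "p \<in> {0..}" and u: "u \<in> {0..1}"
      have "((\<lambda>p. w x (u*p)) has_real_derivative Wt x (u*p) * u) (at p within {0..})"
        unfolding w_def by (rule chainT[OF w_dt]) (use p u in auto)
      from DERIV_cmult[OF this, of "E u"]
      show "((\<lambda>p. E u * w x (u*p)) has_real_derivative E u * u * Wt x (u*p)) (at p within {0..})"
        by (simp add: algebra_simps)
    next
      show "continuous_on ({0..} \<times> {0..1}) (\<lambda>(p, u). E u * u * Wt x (u*p))"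
        by (auto simp: split_beta intro!: continuous_intros cE comp_cont[OF cWt])
    next
      fix p :: real assume p: "p \<in> {0..}"
      show "continuous_on {0..1} (\<lambda>u. E u * w x (u*p))"
        using p by (auto intro!: continuous_intros cE comp0[OF cw])
    qed
    from DERIV_cmult[OF this, of C] show ?thesis
      unfolding V_def vt_def I_def by simp
  qed
  have Dtt: "((\<lambda>s. vt x s) has_real_derivative vtt x t) (at t within {0..})" if t: "t \<ge> 0" for x t
  proof -
    have "((\<lambda>p. integral {0..1} (\<lambda>u. K0 u * (E u * u * Wt x (u*p)))) has_real_derivative
        integral {0..1} (\<lambda>u. K0 u * (E u * u * (u * Wtt x (u*t))))) (at t within {0..})"
    proof (rule KL[OF K0i])
      show "convex {0::real..}" by (simp add: convex_real_interval)
      show "t \<in> {0..}" using t by simp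
      fix p u :: real assume p: "p \<in> {0..}" and u: "u \<in> {0..1}"
      have "((\<lambda>p. Wt x (u*p)) has_real_derivative Wtt x (u*p) * u) (at p within {0..})"
        by (rule chainT[OF Wt_dt]) (use p u in auto)
      from DERIV_cmult[OF this, of "E u * u"]
      show "((\<lambda>p. E u * u * Wt x (u*p)) has_real_derivative E u * u * (u * Wtt x (u*p))) (at p within {0..})"
        by (simp add: algebra_simps)
    next
      show "continuous_on ({0..} \<times> {0..1}) (\<lambda>(p, u). E u * u * (u * Wtt x (u*p)))"
        by (auto simp: split_beta intro!: continuous_intros cE comp_cont[OF cWtt])
    next
      fix p :: real assume p: "p \<in> {0..}"
      show "continuous_on {0..1} (\<lambda>u. E u * u * Wt x (u*p))"
        using p by (auto intro!: continuous_intros cE comp0[OF cWt1])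
    qed
    from DERIV_cmult[OF this, of C] show ?thesis
      unfolding vt_def vtt_def I_def by simp
  qed
  have Dx: "((\<lambda>y. V y t) has_real_derivative vx x t) (at x)" if t: "t \<ge> 0" for x t
  proof -
    have "((\<lambda>p. integral {0..1} (\<lambda>u. K0 u * (E u * w p (u*t)))) has_real_derivative
        integral {0..1} (\<lambda>u. K0 u * (E u * Wx x (u*t)))) (at x within UNIV)"
    proof (rule KL[OF K0i])
      show "convex (UNIV::real set)" by simp
      show "x \<in> UNIV" by simp
      fix p u :: real assume u: "u \<in> {0..1}"
      have "((\<lambda>p. w p (u*t)) has_real_derivative Wx p (u*t)) (at p)"
        unfolding w_def by (rule w_dx) (use u t in auto)
      from DERIV_cmult[OF this, of "E u"]
      show "((\<lambda>p. E u * w p (u*t)) has_real_derivative E u * Wx p (u*t)) (at p within UNIV)"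
        by simp
    next
      show "continuous_on (UNIV \<times> {0..1}) (\<lambda>(p, u). E u * Wx p (u*t))"
        using t by (auto simp: split_beta intro!: continuous_intros cE comp_cont[OF cWx])
    next
      fix p :: real
      show "continuous_on {0..1} (\<lambda>u. E u * w p (u*t))"
        using t by (auto intro!: continuous_intros cE comp0[OF cw])
    qed
    from DERIV_cmult[OF this, of C] show ?thesis
      unfolding V_def vx_def I_def by simp
  qed
  have Dxx: "((\<lambda>y. vx y t) has_real_derivative vxx x t) (at x)" if t: "t \<ge> 0" for x t
  proof -
    have "((\<lambda>p. integral {0..1} (\<lambda>u. K0 u * (E u * Wx p (u*t)))) has_real_derivative
        integral {0..1} (\<lambda>u. K0 u * (E u * Wxx x (u*t)))) (at x within UNIV)"
    proof (rule KL[OF K0i])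
      show "convex (UNIV::real set)" by simp
      show "x \<in> UNIV" by simp
      fix p u :: real assume u: "u \<in> {0..1}"
      have "((\<lambda>p. Wx p (u*t)) has_real_derivative Wxx p (u*t)) (at p)"
        by (rule Wx_dx) (use u t in auto)
      from DERIV_cmult[OF this, of "E u"]
      show "((\<lambda>p. E u * Wx p (u*t)) has_real_derivative E u * Wxx p (u*t)) (at p within UNIV)"
        by simp
    next
      show "continuous_on (UNIV \<times> {0..1}) (\<lambda>(p, u). E u * Wxx p (u*t))"
        using t by (auto simp: split_beta intro!: continuous_intros cE comp_cont[OF cWxx])
    next
      fix p :: real
      show "continuous_on {0..1} (\<lambda>u. E u * Wx p (u*t))"
        using t by (auto intro!: continuous_intros cE comp_cont[OF cWx])
    qed
    from DERIV_cmult[OF this, of C] show ?thesis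
      unfolding vx_def vxx_def I_def by simp
  qed
  have IBP: "t * I (\<lambda>u. E u * ((1 - u^2) * Wtt x (u*t))) = 2 * \<alpha> * I (\<lambda>u. E u * u * Wt x (u*t))"
    if t: "t > 0" for x t
  proof -
    define \<Phi> where "\<Phi> u = (1 - u^2) powr \<alpha> * Wt x (u*t)" for u
    define \<Phi>' where "\<Phi>' u = \<alpha> * (1 - u^2) powr (\<alpha> - 1) * (-2*u) * Wt x (u*t) + (1 - u^2) powr \<alpha> * (Wtt x (u*t) * t)" for u
    have ftc: "(\<Phi>' has_integral (\<Phi> 1 - \<Phi> 0)) {0..1}"
    proof (rule fundamental_theorem_of_calculus_interior)
      have pos: "\<forall>u\<in>{0..1::real}. 1 - u^2 \<ge> 0 \<and> (1 - u^2 = 0 \<longrightarrow> \<alpha> > 0)"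
        using assms(2) by (auto simp: power_le_one)
      show "continuous_on {0..1} \<Phi>"
        unfolding \<Phi>_def
        by (intro continuous_intros continuous_on_powr'[OF _ _ pos] comp0[OF cWt1]) (use t in auto)
    next
      fix u :: real assume u: "u \<in> {0<..<1}"
      have ut: "u * t > 0" using u t by simp
      have "u*u < 1*1" using u by (intro mult_strict_mono) auto
      then have "1 - u^2 > 0" by (simp add: power2_eq_square)
      have d1: "((\<lambda>u. (1 - u^2) powr \<alpha>) has_real_derivative \<alpha> * (1 - u^2) powr (\<alpha> - 1) * (-2*u)) (at u)"
        using DERIV_fun_powr[of "\<lambda>u. 1 - u^2" "-2*u" u \<alpha>] \<open>1 - u^2 > 0\<close>
        by (auto intro!: derivative_eq_intros)
      have d2: "((\<lambda>s. Wt x s) has_real_derivative Wtt x (u*t)) (at (u*t))"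
        by (rule at_of_within[OF Wt_dt ut]) (use ut in simp)
      have d3: "((\<lambda>u. Wt x (u*t)) has_real_derivative Wtt x (u*t) * t) (at u)"
      proof -
        have "((\<lambda>u. u*t) has_real_derivative t) (at u)" by (auto intro!: derivative_eq_intros)
        from DERIV_chain[OF d2 this] show ?thesis by (simp add: o_def)
      qed
      have "(\<Phi> has_real_derivative \<Phi>' u) (at u)"
        unfolding \<Phi>_def \<Phi>'_def using DERIV_mult[OF d1 d3] by (simp add: mult.commute)
      then show "(\<Phi> has_vector_derivative \<Phi>' u) (at u)"
        by (simp add: has_real_derivative_iff_has_vector_derivative)
    qed simp
    have "\<Phi> 1 - \<Phi> 0 = 0" unfolding \<Phi>_def using assms(2) by (simp add: Wt0)
    then have "integral {0..1} \<Phi>' = 0" using ftc by (simp add: has_integral_iff)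
    moreover have "integral {0..1} \<Phi>' = I (\<lambda>u. (-2*\<alpha>) * (E u * u * Wt x (u*t)) + t * (E u * ((1 - u^2) * Wtt x (u*t))))"
      unfolding I_def
    proof (rule integral_cong)
      fix u :: real assume u: "u \<in> {0..1}"
      have k: "(1 - u^2) powr (\<alpha> - 1) = K0 u * E u" by (rule kern[OF u])
      have "(1 - u^2) powr \<alpha> = (1 - u^2) powr (\<alpha> - 1) * (1 - u^2)"
      proof (cases "1 - u^2 = 0")
        case True then show ?thesis by simp
      next
        case False
        then have "1 - u^2 > 0" using u by (auto simp: power_le_one less_le)
        then show ?thesis by (simp add: powr_diff)
      qed
      then have pw: "(1 - u^2) powr \<alpha> = K0 u * E u * (1 - u^2)" by (simp add: k)
      show "\<Phi>' u = K0 u * ((-2*\<alpha>) * (E u * u * Wt x (u*t)) + t * (E u * ((1 - u^2) * Wtt x (u*t))))"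
        unfolding \<Phi>'_def pw k by (simp add: algebra_simps)
    qed
    moreover have "I (\<lambda>u. (-2*\<alpha>) * (E u * u * Wt x (u*t)) + t * (E u * ((1 - u^2) * Wtt x (u*t))))
        = (-2*\<alpha>) * I (\<lambda>u. E u * u * Wt x (u*t)) + t * I (\<lambda>u. E u * ((1 - u^2) * Wtt x (u*t)))"
      apply (subst Iadd)
        apply (use t in \<open>auto intro!: continuous_intros cE comp0[OF cWt1] comp_cont[OF cWtt]\<close>)[2]
      using Imult[of "-2*\<alpha>" "\<lambda>u. E u * u * Wt x (u*t)"] Imult[of t "\<lambda>u. E u * ((1 - u^2) * Wtt x (u*t))"]
      by (simp only:)
    ultimately show ?thesis by simp
  qed
  have ident: "vtt x t + 2 * \<alpha> / t * vt x t = c^2 * vxx x t + EPD_avg \<alpha> F x t" if t: "t > 0" for x t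
  proof -
    have cc: "continuous_on {0..1} (\<lambda>u. E u * Wtt x (u*t))"
      "continuous_on {0..1} (\<lambda>u. E u * ((1 - u^2) * Wtt x (u*t)))"
      "continuous_on {0..1} (\<lambda>u. E u * F x (u*t))"
      "continuous_on {0..1} (\<lambda>u. c^2 * (E u * Wxx x (u*t)))"
      using t by (auto intro!: continuous_intros cE comp_cont[OF cWtt] comp_cont[OF cF] comp_cont[OF cWxx])
    have A: "I (\<lambda>u. E u * u * (u * Wtt x (u*t))) = I (\<lambda>u. E u * Wtt x (u*t)) - I (\<lambda>u. E u * ((1 - u^2) * Wtt x (u*t)))"
    proof -
      have "I (\<lambda>u. E u * u * (u * Wtt x (u*t))) = I (\<lambda>u. E u * Wtt x (u*t) - E u * ((1 - u^2) * Wtt x (u*t)))"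
        by (rule Icong) (simp add: algebra_simps power2_eq_square)
      also have "\<dots> = I (\<lambda>u. E u * Wtt x (u*t)) - I (\<lambda>u. E u * ((1 - u^2) * Wtt x (u*t)))"
        by (rule Idiff[OF cc(1) cc(2)])
      finally show ?thesis .
    qed
    have B: "I (\<lambda>u. E u * Wtt x (u*t)) = I (\<lambda>u. E u * F x (u*t)) + c^2 * I (\<lambda>u. E u * Wxx x (u*t))"
    proof -
      have "I (\<lambda>u. E u * Wtt x (u*t)) = I (\<lambda>u. E u * F x (u*t) + c^2 * (E u * Wxx x (u*t)))"
        by (rule Icong) (simp add: wave algebra_simps)
      also have "\<dots> = I (\<lambda>u. E u * F x (u*t)) + I (\<lambda>u. c^2 * (E u * Wxx x (u*t)))"
        by (rule Iadd[OF cc(3) cc(4)])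
      finally show ?thesis by (simp add: Imult)
    qed
    have C2: "I (\<lambda>u. E u * ((1 - u^2) * Wtt x (u*t))) = 2 * \<alpha> / t * I (\<lambda>u. E u * u * Wt x (u*t))"
      using IBP[OF t, of x] t by (simp add: field_simps)
    show ?thesis
      unfolding vtt_def vt_def vxx_def avg A B C2 by (simp add: algebra_simps)
  qed
  have P1: "((\<lambda>s. v x s) has_real_derivative vt x t) (at t) \<and>
              ((\<lambda>s. vt x s) has_real_derivative vtt x t) (at t) \<and>
              ((\<lambda>y. v y t) has_real_derivative vx x t) (at x) \<and>
              ((\<lambda>y. vx y t) has_real_derivative vxx x t) (at x) \<and>
              vtt x t + 2 * \<alpha> / t * vt x t = c^2 * vxx x t + EPD_avg \<alpha> F x t" if t: "t > 0" for x t
  proof (intro conjI)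
    show "((\<lambda>s. v x s) has_real_derivative vt x t) (at t)"
      unfolding vV using at_of_within[OF Dt[of t x] t] t by simp
    show "((\<lambda>s. vt x s) has_real_derivative vtt x t) (at t)"
      using at_of_within[OF Dtt[of t x] t] t by simp
    show "((\<lambda>y. v y t) has_real_derivative vx x t) (at x)"
      unfolding vV using Dx[of t x] t by simp
    show "((\<lambda>y. vx y t) has_real_derivative vxx x t) (at x)"
      using Dxx[of t x] t by simp
    show "vtt x t + 2 * \<alpha> / t * vt x t = c^2 * vxx x t + EPD_avg \<alpha> F x t"
      by (rule ident[OF t])
  qed
  have P2: "v x 0 = 0 \<and> ((\<lambda>s. v x s) has_real_derivative 0) (at 0 within {0..})" for x
  proof
    show "v x 0 = 0"
      unfolding vV V_def I_def w_def by (simp add: w0)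
    have "vt x 0 = 0" unfolding vt_def I_def by (simp add: Wt0)
    then show "((\<lambda>s. v x s) has_real_derivative 0) (at 0 within {0..})"
      using Dt[of 0 x] unfolding vV by simp
  qed
  show ?thesis
    apply (rule exI[of _ vt], rule exI[of _ vtt], rule exI[of _ vx], rule exI[of _ vxx])
    using P1 P2 by blast
qed

end
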